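(* Let $\epsilon\in(0,1)$ and let $r=r(n)$ be any function with $r=o(\sqrt{\log n})$. Then for every $n$ there is a finite collection of linear equations $C_1,\dots,C_m$ over the dihedral group $\mathbf{D}_3$ on the variables $x_1,\dots,x_n$ such that every $(1\pm\epsilon)$ code sparsifier of $C_1,\dots,C_m$ has size at least $n^{r-o(1)}$. In particular (taking $r\to\infty$ slowly), there are such collections over a group of constant size for which every $(1\pm\epsilon)$ code sparsifier has size $n^{\omega(1)}=\log^{\omega(1)}(|\mathbf{D}_3^n|)$.
   Context: $\mathbf{D}_3$ is the dihedral group of order 6 (non-abelian). For a group $G$, a linear equation over $G$ on variables $x_1,\dots,x_n\in\{0,1\}$ is a map $C:\{0,1\}^n\to G$ of the form $C(x)=a_1^{x_1}a_2^{x_2}\cdots a_n^{x_n}$ with $a_1,\dots,a_n\in G$ (the product taken in this order, $a^0=1$). Given linear equations $C_1,\dots,C_m$, a $(1\pm\epsilon)$ code sparsifier is a subset $S\subseteq[m]$ with weights $w_i>0$ ($i\in S$) such that for every $x\in\{0,1\}^n$, $(1-\epsilon)\sum_{i\in[m]}\mathbf 1[C_i(x)\ne1]\le\sum_{i\in S}w_i\mathbf 1[C_i(x)\ne1]\le(1+\epsilon)\sum_{i\in[m]}\mathbf 1[C_i(x)\ne1]$; its size is $|S|$. *)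

theory Defs
  imports Complex_Main "HOL-Library.Numeral_Type" "HOL-Library.Landau_Symbols"
begin

text \<open>The dihedral group D_3 of order 6: element (k, s) stands for rho^k sigma^s,
  where rho is a rotation of order 3 (k in Z/3) and sigma a reflection (s = True).
  Multiplication: rho^a sigma^s * rho^b sigma^t = rho^(a + (-1)^s b) sigma^(s+t).\<close>
type_synonym D3 = "3 \<times> bool"

definition d3_one :: D3 where "d3_one = (0, False)"

definition d3_mult :: "D3 \<Rightarrow> D3 \<Rightarrow> D3" where
  "d3_mult g h = (fst g + (if snd g then - fst h else fst h), snd g \<noteq> snd h)"

definition d3_pow01 :: "D3 \<Rightarrow> bool \<Rightarrow> D3" where
  "d3_pow01 a x = (if x then a else d3_one)"

definition lin_eq_val :: "nat \<Rightarrow> (nat \<Rightarrow> D3) \<Rightarrow> (nat \<Rightarrow> bool) \<Rightarrow> D3" where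
  "lin_eq_val n a x = foldr (\<lambda>j acc. d3_mult (d3_pow01 (a j) (x j)) acc) [0..<n] d3_one"

definition unsat_count :: "nat \<Rightarrow> nat \<Rightarrow> (nat \<Rightarrow> nat \<Rightarrow> D3) \<Rightarrow> (nat \<Rightarrow> bool) \<Rightarrow> real" where
  "unsat_count n m C x = real (card {i \<in> {..<m}. lin_eq_val n (C i) x \<noteq> d3_one})"

definition code_sparsifier ::
  "real \<Rightarrow> nat \<Rightarrow> nat \<Rightarrow> (nat \<Rightarrow> nat \<Rightarrow> D3) \<Rightarrow> nat set \<Rightarrow> (nat \<Rightarrow> real) \<Rightarrow> bool" where
  "code_sparsifier eps n m C S w \<longleftrightarrow>
     S \<subseteq> {..<m} \<and> (\<forall>i\<in>S. w i > 0) \<and>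
     (\<forall>x :: nat \<Rightarrow> bool. (\<forall>j. j \<ge> n \<longrightarrow> \<not> x j) \<longrightarrow>
        (1 - eps) * unsat_count n m C x
          \<le> (\<Sum>i\<in>S. w i * (if lin_eq_val n (C i) x \<noteq> d3_one then 1 else 0)) \<and>
        (\<Sum>i\<in>S. w i * (if lin_eq_val n (C i) x \<noteq> d3_one then 1 else 0))
          \<le> (1 + eps) * unsat_count n m C x)"

end

theory Submission
  imports Defs
begin
definition rho :: D3 where "rho = (1, False)"
definition sig :: D3 where "sig = (0, True)"
definition d3_inv :: "D3 \<Rightarrow> D3" where "d3_inv a = (if snd a then a else (- fst a, False))"
lemma d3_assoc: "d3_mult (d3_mult a b) c = d3_mult a (d3_mult b c)"
  by (cases a; cases b; cases c) (auto simp: d3_mult_def algebra_simps)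
lemma d3_one_l[simp]: "d3_mult d3_one a = a" by (cases a) (simp add: d3_mult_def d3_one_def)
lemma d3_one_r[simp]: "d3_mult a d3_one = a" by (cases a) (simp add: d3_mult_def d3_one_def)
lemma d3_inv_mult: "d3_inv (d3_mult a b) = d3_mult (d3_inv b) (d3_inv a)"
  by (cases a; cases b) (auto simp: d3_mult_def d3_inv_def algebra_simps)
lemma d3_inv_one[simp]: "d3_inv d3_one = d3_one" by (simp add: d3_inv_def d3_one_def)
lemma rho_calc: "d3_mult sig (d3_mult rho (d3_mult sig (d3_inv rho))) = rho"
  by (simp add: d3_mult_def d3_inv_def rho_def sig_def)
lemma sig_calc: "d3_mult sig (d3_mult sig d3_one) = d3_one"
  by (simp add: d3_mult_def sig_def d3_one_def)
lemma rho_inv_r: "d3_mult rho (d3_inv rho) = d3_one" by (simp add: d3_mult_def d3_inv_def rho_def d3_one_def)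
lemma sig_sig: "d3_mult sig sig = d3_one" by (simp add: d3_mult_def sig_def d3_one_def)
lemma rho_ne: "rho \<noteq> d3_one" by (simp add: rho_def d3_one_def)
definition peval :: "(nat \<times> D3) list \<Rightarrow> (nat \<Rightarrow> bool) \<Rightarrow> D3" where
  "peval P b = foldr (\<lambda>gc acc. d3_mult (d3_pow01 (snd gc) (b (fst gc))) acc) P d3_one"
definition inv_prog :: "(nat \<times> D3) list \<Rightarrow> (nat \<times> D3) list" where
  "inv_prog P = rev (map (\<lambda>gc. (fst gc, d3_inv (snd gc))) P)"
lemma peval_append: "peval (P @ Q) b = d3_mult (peval P b) (peval Q b)"
  by (induction P) (simp_all add: peval_def d3_assoc)
lemma peval_Cons: "peval (p # P) b = d3_mult (d3_pow01 (snd p) (b (fst p))) (peval P b)"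
  by (simp add: peval_def)
lemma peval_Nil[simp]: "peval [] b = d3_one" by (simp add: peval_def)
lemma pow01_inv: "d3_pow01 (d3_inv c) x = d3_inv (d3_pow01 c x)"
  by (simp add: d3_pow01_def)
lemma peval_inv: "peval (inv_prog P) b = d3_inv (peval P b)"
proof (induction P)
  case Nil thus ?case by (simp add: inv_prog_def)
next
  case (Cons p P)
  have "inv_prog (p # P) = inv_prog P @ [(fst p, d3_inv (snd p))]" by (simp add: inv_prog_def)
  thus ?case using Cons by (simp add: peval_append peval_Cons pow01_inv d3_inv_mult)
qed
fun andprog :: "nat \<Rightarrow> (nat \<times> D3) list" where
  "andprog 0 = [(0, rho)]"
| "andprog (Suc k) = [(Suc k, sig)] @ andprog k @ [(Suc k, sig)] @ inv_prog (andprog k)"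
lemma peval_andprog: "peval (andprog k) b = (if (\<forall>g\<le>k. b g) then rho else d3_one)"
proof (induction k)
  case 0 thus ?case by (simp add: peval_Cons d3_pow01_def)
next
  case (Suc k)
  have "(\<forall>g\<le>Suc k. b g) = (b (Suc k) \<and> (\<forall>g\<le>k. b g))" using le_Suc_eq by auto
  thus ?case using Suc
    by (auto simp: peval_append peval_Cons peval_inv d3_pow01_def rho_calc d3_assoc sig_calc rho_inv_r sig_sig)
qed
lemma length_andprog: "length (andprog k) + 2 = 3 * 2 ^ k"
  by (induction k) (auto simp: inv_prog_def)
lemma andprog_groups: "gc \<in> set (andprog k) \<Longrightarrow> fst gc \<le> k"
  apply (induction k arbitrary: gc)
  apply simp
  apply (simp add: inv_prog_def)
  by (auto, (force intro: le_SucI)+)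
definition prodr :: "(nat \<Rightarrow> D3) \<Rightarrow> nat list \<Rightarrow> D3" where
  "prodr f xs = foldr (\<lambda>j acc. d3_mult (f j) acc) xs d3_one"
lemma prodr_append: "prodr f (xs @ ys) = d3_mult (prodr f xs) (prodr f ys)"
  by (induction xs) (simp_all add: prodr_def d3_assoc)
lemma prodr_ones: "\<forall>j\<in>set xs. f j = d3_one \<Longrightarrow> prodr f xs = d3_one"
  by (induction xs) (simp_all add: prodr_def)
lemma prodr_single: "distinct xs \<Longrightarrow> j0 \<in> set xs \<Longrightarrow> \<forall>j\<in>set xs. j \<noteq> j0 \<longrightarrow> f j = d3_one
   \<Longrightarrow> prodr f xs = f j0"
proof (induction xs)
  case Nil thus ?case by simp
next
  case (Cons a xs)
  show ?case
  proof (cases "a = j0")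
    case True
    hence "prodr f xs = d3_one" using Cons.prems by (intro prodr_ones) auto
    thus ?thesis using True by (simp add: prodr_def)
  next
    case False
    hence "prodr f xs = f j0" using Cons by auto
    thus ?thesis using False Cons.prems by (simp add: prodr_def)
  qed
qed
lemma prodr_map: "prodr f (map h xs) = prodr (f \<circ> h) xs"
  by (induction xs) (simp_all add: prodr_def)
lemma prodr_concat: "prodr f (concat xss) = foldr (\<lambda>xs acc. d3_mult (prodr f xs) acc) xss d3_one"
  proof (induction xss)
  case Nil thus ?case by (simp add: prodr_def)
next
  case (Cons a xss) thus ?case using prodr_append[of f a "concat xss"] by simp
qed
lemma upt_rounds: "[0..<L * N] = concat (map (\<lambda>l. map (\<lambda>s. l * N + s) [0..<N]) [0..<L])"
proof (induction L)
  case 0 thus ?case by simp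
next
  case (Suc L)
  have "[0..<Suc L * N] = [0..<L * N] @ [L*N..<L*N + N]"
    using upt_add_eq_append[of 0 "L*N" N] by (simp add: add.commute)
  moreover have "[L*N..<L*N + N] = map (\<lambda>s. L * N + s) [0..<N]"
    using map_add_upt[of "L*N" N] by (simp add: add.commute)
  ultimately show ?case using Suc by simp
qed

definition digit :: "nat \<Rightarrow> nat \<Rightarrow> nat \<Rightarrow> nat" where "digit N i g = i div N ^ g mod N"
definition Ceq :: "nat \<Rightarrow> (nat \<times> D3) list \<Rightarrow> nat \<Rightarrow> nat \<Rightarrow> D3" where
  "Ceq N P i p = (if p < length P * N then (if p mod N = digit N i (fst (P!(p div N)))
      then snd (P!(p div N)) else d3_one) else d3_one)"
definition Xw :: "nat \<Rightarrow> (nat \<times> D3) list \<Rightarrow> nat \<Rightarrow> nat \<Rightarrow> bool" where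
  "Xw N P i p = (p < length P * N \<and> p mod N = digit N i (fst (P!(p div N))))"

lemma key:
  assumes N: "0 < N" and n: "length P * N \<le> n"
  shows "lin_eq_val n (Ceq N P i') (Xw N P i) = peval P (\<lambda>g. digit N i' g = digit N i g)"
proof -
  define f where "f j = d3_pow01 (Ceq N P i' j) (Xw N P i j)" for j
  define L where "L = length P"
  have "lin_eq_val n (Ceq N P i') (Xw N P i) = prodr f [0..<n]"
    by (simp add: lin_eq_val_def prodr_def f_def)
  also have "[0..<n] = [0..<L*N] @ [L*N..<n]"
    using n upt_add_eq_append[of 0 "L*N" "n - L*N"] by (simp add: L_def)
  also have "prodr f ([0..<L*N] @ [L*N..<n]) = prodr f [0..<L*N]"
  proof -
    have "prodr f [L*N..<n] = d3_one"
      by (rule prodr_ones) (auto simp: f_def Ceq_def Xw_def d3_pow01_def L_def)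
    thus ?thesis by (simp add: prodr_append)
  qed
  also have "prodr f [0..<L*N] = foldr (\<lambda>l acc. d3_mult (prodr f (map (\<lambda>s. l * N + s) [0..<N])) acc) [0..<L] d3_one"
    by (simp add: upt_rounds prodr_concat foldr_map o_def)
  also have "\<dots> = foldr (\<lambda>l acc. d3_mult (d3_pow01 (snd (P!l)) (digit N i' (fst (P!l)) = digit N i (fst (P!l)))) acc) [0..<L] d3_one"
  proof (rule foldr_cong)
    fix l acc assume l: "l \<in> set [0..<L]"
    define d where "d = digit N i' (fst (P!l))"
    have dN: "d < N" using N by (simp add: d_def digit_def)
    have "prodr f (map (\<lambda>s. l * N + s) [0..<N]) = prodr (f \<circ> (\<lambda>s. l * N + s)) [0..<N]"
      by (rule prodr_map)
    also have "\<dots> = (f \<circ> (\<lambda>s. l * N + s)) d"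
    proof (rule prodr_single)
      show "\<forall>j\<in>set [0..<N]. j \<noteq> d \<longrightarrow> (f \<circ> (\<lambda>s. l * N + s)) j = d3_one"
      proof (intro ballI impI)
        fix j assume j: "j \<in> set [0..<N]" "j \<noteq> d"
        have "(l * N + j) div N = l" "(l * N + j) mod N = j" using j N by auto
        thus "(f \<circ> (\<lambda>s. l * N + s)) j = d3_one"
          using j by (simp add: f_def Ceq_def d3_pow01_def d_def)
      qed
    qed (use dN in auto)
    also have "\<dots> = d3_pow01 (snd (P!l)) (digit N i' (fst (P!l)) = digit N i (fst (P!l)))"
    proof -
      have "Suc l \<le> L" using l by simp
      hence "Suc l * N \<le> L * N" by (rule mult_le_mono1)
      hence lt: "l * N + d < L * N" using dN by simp
      have "(l * N + d) div N = l" "(l * N + d) mod N = d" using dN N by auto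
      thus ?thesis using lt by (auto simp: f_def Ceq_def Xw_def d_def L_def d3_pow01_def)
    qed
    finally show "d3_mult (prodr f (map (\<lambda>s. l * N + s) [0..<N])) acc = d3_mult (d3_pow01 (snd (P!l)) (digit N i' (fst (P!l)) = digit N i (fst (P!l)))) acc"
      by simp
  qed simp_all
  also have "\<dots> = peval P (\<lambda>g. digit N i' g = digit N i g)"
  proof -
    have "P = map (nth P) [0..<L]" by (simp add: L_def map_nth)
    hence "peval P (\<lambda>g. digit N i' g = digit N i g) = peval (map (nth P) [0..<L]) (\<lambda>g. digit N i' g = digit N i g)" by simp
    thus ?thesis by (simp add: peval_def foldr_map o_def)
  qed
  finally show ?thesis .
qed
lemma digit_inj: "i < N ^ K \<Longrightarrow> i' < N ^ K \<Longrightarrow> \<forall>g<K. digit N i g = digit N i' g \<Longrightarrow> i = i'"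
proof (induction K arbitrary: i i')
  case 0 thus ?case by simp
next
  case (Suc K)
  have N: "0 < N" using Suc.prems(1) by (cases "N = 0") auto
  have a: "i div N < N ^ K" "i' div N < N ^ K" using Suc.prems N
    by (auto simp: div_less_iff_less_mult mult.commute)
  have "\<forall>g<K. digit N (i div N) g = digit N (i' div N) g"
  proof (intro allI impI)
    fix g assume "g < K"
    hence "digit N i (Suc g) = digit N i' (Suc g)" using Suc.prems(3) by auto
    thus "digit N (i div N) g = digit N (i' div N) g" by (simp add: digit_def div_mult2_eq)
  qed
  hence "i div N = i' div N" using Suc.IH a by blast
  moreover have "i mod N = i' mod N" using Suc.prems(3) by (auto simp: digit_def)
  ultimately show ?case by (metis div_mult_mod_eq)
qed

lemma isolate:
  assumes eps: "eps < 1" and N: "0 < N" and n: "length P * N \<le> n"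
    and iso: "\<And>i'. i' < m \<Longrightarrow> (lin_eq_val n (Ceq N P i') (Xw N P i) \<noteq> d3_one) = (i' = i)"
    and i: "i < m" and sp: "code_sparsifier eps n m (Ceq N P) S w"
  shows "i \<in> S"
proof (rule ccontr)
  assume nS: "i \<notin> S"
  let ?x = "Xw N P i"
  have x0: "\<forall>j. j \<ge> n \<longrightarrow> \<not> ?x j" using n by (auto simp: Xw_def)
  have "{i' \<in> {..<m}. lin_eq_val n (Ceq N P i') ?x \<noteq> d3_one} = {i}" using iso i by auto
  hence uc: "unsat_count n m (Ceq N P) ?x = 1" by (simp add: unsat_count_def)
  have Ssub: "S \<subseteq> {..<m}" using sp by (simp add: code_sparsifier_def)
  have "(\<Sum>i'\<in>S. w i' * (if lin_eq_val n (Ceq N P i') ?x \<noteq> d3_one then 1 else 0)) = (\<Sum>i'\<in>S. 0)"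
  proof (rule sum.cong)
    fix i' assume "i' \<in> S"
    hence "i' < m" "i' \<noteq> i" using Ssub nS by auto
    thus "w i' * (if lin_eq_val n (Ceq N P i') ?x \<noteq> d3_one then 1 else 0) = 0" using iso by simp
  qed simp
  moreover have "(1 - eps) * unsat_count n m (Ceq N P) ?x \<le> (\<Sum>i'\<in>S. w i' * (if lin_eq_val n (Ceq N P i') ?x \<noteq> d3_one then 1 else 0))"
    using sp x0 unfolding code_sparsifier_def by blast
  ultimately show False using uc eps by simp
qed

lemma construct:
  assumes eps: "eps < 1"
  shows "\<exists>m C. m = (n div length (andprog k)) ^ (k+1) \<and>
     (\<forall>S w. code_sparsifier eps n m C S w \<longrightarrow> real m \<le> real (card S))"
proof -
  define P where "P = andprog k"
  define N where "N = n div length P"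
  define m where "m = N ^ (k+1)"
  show ?thesis
  proof (intro exI conjI allI impI)
    show "m = (n div length (andprog k)) ^ (k+1)" by (simp add: m_def N_def P_def)
    fix S w assume sp: "code_sparsifier eps n m (Ceq N P) S w"
    show "real m \<le> real (card S)"
    proof (cases "N = 0")
      case True thus ?thesis by (simp add: m_def)
    next
      case False
      hence N: "0 < N" by simp
      have n: "length P * N \<le> n" by (simp add: N_def)
      have "{..<m} \<subseteq> S"
      proof
        fix i assume "i \<in> {..<m}"
        hence i: "i < m" by simp
        have iso: "(lin_eq_val n (Ceq N P i') (Xw N P i) \<noteq> d3_one) = (i' = i)" if "i' < m" for i'
        proof -
          have "(lin_eq_val n (Ceq N P i') (Xw N P i) \<noteq> d3_one) = (\<forall>g\<le>k. digit N i' g = digit N i g)"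
            using key[OF N n] by (simp add: P_def peval_andprog rho_ne)
          also have "\<dots> = (i' = i)"
          proof
            assume "\<forall>g\<le>k. digit N i' g = digit N i g"
            thus "i' = i" using digit_inj[of i' N "k+1" i] that i by (auto simp: m_def)
          qed simp
          finally show ?thesis .
        qed
        show "i \<in> S" by (rule isolate[OF eps N n iso i sp])
      qed
      moreover have "finite S" using sp by (auto simp: code_sparsifier_def intro: finite_subset)
      ultimately have "card {..<m} \<le> card S" by (rule card_mono[rotated])
      thus ?thesis by simp
    qed
  qed
qed
lemma big_real:
  fixes n L N k :: nat
  assumes ln25: "25 \<le> ln (real n)" and kdef: "k = nat \<lfloor>sqrt (ln (real n))\<rfloor>"
    and L: "0 < L" "real L \<le> 3 * 2 ^ k" and Ndef: "N = n div L"
  shows "real n powr (sqrt (ln (real n)) / 2) \<le> real N ^ (k+1)"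
proof -
  define t where "t = sqrt (ln (real n))"
  have t5: "5 \<le> t" unfolding t_def using real_sqrt_le_mono[OF ln25] by simp
  have npos: "0 < real n" using ln25 by (cases "n = 0") auto
  have tt: "t^2 = ln (real n)" unfolding t_def using ln25 by simp
  have nexp: "real n = exp (t^2)" using tt npos by simp
  have kt: "real k \<le> t" "t \<le> real k + 1" using t5 unfolding kdef t_def[symmetric]
    by (simp_all add: of_nat_nat)
  define s where "s = sqrt (real n)"
  have s1: "1 \<le> s" unfolding s_def using npos by simp
  have sexp: "s = exp (t^2/2)"
  proof -
    have "s = real n powr (1/2)" unfolding s_def using npos by (simp add: powr_half_sqrt)
    also have "\<dots> = exp (ln (real n) * (1/2))" using npos by (simp add: powr_def)
    finally show ?thesis using tt by simp
  qed
  have e2: "2 \<le> exp (1::real)" using exp_ge_add_one_self[of 1] by simp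
  have "(2::real) ^ k \<le> exp 1 ^ k" by (rule power_mono[OF e2]) simp
  also have "\<dots> = exp (real k)" by (simp add: exp_of_nat_mult[symmetric])
  also have "\<dots> \<le> exp t" using kt by simp
  finally have "real L \<le> 3 * exp t" using L by linarith
  have "real L * (s + 1) \<le> 3 * exp t * (2 * s)"
    using \<open>real L \<le> 3 * exp t\<close> s1 by (intro mult_mono) auto
  also have "\<dots> = 6 * exp (t + t^2/2)" by (simp add: sexp exp_add)
  also have "\<dots> \<le> exp (t^2/2 - t) * exp (t + t^2/2)"
  proof -
    have "t^2/2 - t \<ge> 5"
    proof -
      have "t * (t/2 - 1) \<ge> 5 * (5/2 - 1)" using t5 by (intro mult_mono) auto
      thus ?thesis by (simp add: power2_eq_square algebra_simps)
    qed
    hence "6 \<le> exp (t^2/2 - t)" using exp_ge_add_one_self[of "t^2/2 - t"] by linarith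
    thus ?thesis by simp
  qed
  also have "\<dots> = real n" by (simp add: nexp exp_add[symmetric])
  finally have nb: "real L * (s + 1) \<le> real n" .
  have "n < L * (N + 1)" unfolding Ndef using L(1)
    by (metis add.commute div_mult_mod_eq mod_less_divisor mult.commute mult_Suc_right nat_add_left_cancel_less Suc_eq_plus1)
  hence "real n < real L * (real N + 1)" by (metis of_nat_1 of_nat_add of_nat_less_iff of_nat_mult)
  hence "real L * (s + 1) < real L * (real N + 1)" using nb by linarith
  hence sN: "s \<le> real N" using L(1) by simp
  have "real n powr (t / 2) = s powr t"
    unfolding s_def using npos by (simp add: powr_half_sqrt[symmetric] powr_powr)
  also have "\<dots> \<le> s powr (real k + 1)" using s1 kt by (intro powr_mono) auto
  also have "\<dots> = s ^ (k+1)"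
  proof -
    have "s powr (real k + 1) = s powr (real (k+1))" by (simp add: add.commute)
    also have "\<dots> = s ^ (k+1)" using s1 by (intro powr_realpow) auto
    finally show ?thesis .
  qed
  also have "\<dots> \<le> real N ^ (k+1)" using sN s1 by (intro power_mono) auto
  finally show ?thesis unfolding t_def .
qed

theorem mainTheorem3:
  fixes eps :: real and r :: "nat \<Rightarrow> real"
  assumes "0 < eps" "eps < 1"
    and "r \<in> o(\<lambda>n. sqrt (ln (real n)))"
  shows "\<exists>g :: nat \<Rightarrow> real. g \<longlonglongrightarrow> 0 \<and>
           (\<forall>n. \<exists>m (C :: nat \<Rightarrow> nat \<Rightarrow> D3).
              \<forall>S w. code_sparsifier eps n m C S w \<longrightarrow>
                real (card S) \<ge> real n powr (r n - g n))"
proof -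
  define cond where "cond n \<longleftrightarrow> 25 \<le> ln (real n) \<and> r n \<le> sqrt (ln (real n)) / 2" for n
  define g where "g n = (if cond n then 0 else r n)" for n
  have ev1: "eventually (\<lambda>n. norm (r n) \<le> (1/2) * norm (sqrt (ln (real n)))) at_top"
    using assms(3) by (rule landau_o.smallD) simp
  have ev2: "eventually (\<lambda>n::nat. 25 \<le> ln (real n)) at_top"
  proof -
    have "eventually (\<lambda>n::nat. nat \<lceil>exp (25::real)\<rceil> \<le> n) at_top" by (rule eventually_ge_at_top)
    moreover have "25 \<le> ln (real n)" if "nat \<lceil>exp (25::real)\<rceil> \<le> n" for n :: nat
    proof -
      have "exp 25 \<le> real n" using that by linarith
      moreover have "0 < (exp 25::real)" by simp
      ultimately have "0 < real n" by linarith
      hence "ln (exp 25) \<le> ln (real n)" using \<open>exp 25 \<le> real n\<close> by (subst ln_le_cancel_iff) auto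
      thus ?thesis by simp
    qed
    ultimately show ?thesis by (auto elim: eventually_mono)
  qed
  have "eventually (\<lambda>n. g n = 0) at_top"
    using ev1 ev2
  proof eventually_elim
    case (elim n)
    have "r n \<le> sqrt (ln (real n)) / 2" using elim by auto
    thus ?case using elim by (simp add: g_def cond_def)
  qed
  hence gl: "g \<longlonglongrightarrow> 0" by (rule tendsto_eventually)
  have "\<exists>m (C :: nat \<Rightarrow> nat \<Rightarrow> D3). \<forall>S w. code_sparsifier eps n m C S w \<longrightarrow>
                real (card S) \<ge> real n powr (r n - g n)" for n
  proof (cases "cond n")
    case True
    define k where "k = nat \<lfloor>sqrt (ln (real n))\<rfloor>"
    obtain m C where mC: "m = (n div length (andprog k)) ^ (k+1)"
      "\<And>S w. code_sparsifier eps n m C S w \<Longrightarrow> real m \<le> real (card S)"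
      using construct[OF assms(2), of n k] by blast
    have L: "0 < length (andprog k)" "real (length (andprog k)) \<le> 3 * 2 ^ k"
    proof -
      have e: "length (andprog k) + 2 = 3 * 2 ^ k" by (rule length_andprog)
      have "andprog k \<noteq> []" by (cases k) auto
      hence "0 < length (andprog k)" by simp
      moreover have "real (length (andprog k)) + 2 = 3 * 2 ^ k"
        using arg_cong[OF e, of real] by simp
      ultimately show "0 < length (andprog k)" "real (length (andprog k)) \<le> 3 * 2 ^ k" by simp_all
    qed
    have n1: "1 \<le> real n" using True unfolding cond_def by (cases "n = 0") auto
    have rg: "r n - g n \<le> sqrt (ln (real n)) / 2" using True by (simp add: g_def cond_def)
    have "real n powr (r n - g n) \<le> real n powr (sqrt (ln (real n)) / 2)"
      by (rule powr_mono[OF rg n1])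
    also have "\<dots> \<le> real (n div length (andprog k)) ^ (k+1)"
      by (rule big_real[OF _ k_def L refl]) (use True in \<open>simp add: cond_def\<close>)
    also have "\<dots> = real m" using mC(1) by simp
    finally have "real n powr (r n - g n) \<le> real m" .
    thus ?thesis using mC(2) by (blast intro: order_trans)
  next
    case False
    obtain m C where mC: "m = (n div length (andprog 0)) ^ (0+1)"
      "\<And>S w. code_sparsifier eps n m C S w \<Longrightarrow> real m \<le> real (card S)"
      using construct[OF assms(2), of n 0] by blast
    have "m = n" using mC(1) by simp
    moreover have "real n powr (r n - g n) \<le> real n" using False by (simp add: g_def)
    ultimately have "real n powr (r n - g n) \<le> real m" by simp
    thus ?thesis using mC(2) by (blast intro: order_trans)
  qed
  thus ?thesis using gl by blast
qed
end
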